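(* Let $G'=(V',E')$ be a substructure of an oriented graph $G$ with $|V'|\ge|E'|$, and let $\omega\in\mathbb{C}$ with $|\omega|=1$. If $\det L_\omega(G')\neq 0$, then $G'$ is all-regular, i.e. every connected component $(V'_i,E'_i)$ of $G'$ satisfies $|V'_i|=|E'_i|$.
   Context: An oriented graph $G=(V,E)$ is a finite directed graph with no loops, no multiple arcs, and no pair of opposite arcs. A substructure of $G$ is a pair $G'=(V',E')$ with $V'\subseteq V$, $E'\subseteq E$; arcs of $E'$ may have endpoints outside $V'$. The Hermitian Laplacian $L_\omega(G')$ is the $V'\times V'$ matrix with diagonal entry at $u$ equal to the number of arcs of $E'$ incident with $u$, and $(u,v)$ entry ($u\ne v$) equal to $-\omega$ if some arc of $E'$ goes $u\to v$, $-\overline\omega$ if some arc of $E'$ goes $v\to u$, $0$ otherwise. Two vertices $u,v\in V'$ are connected in $G'$ if there is a path between them (ignoring arc directions) with all vertices in $V'$ and all arcs in $E'$; the equivalence classes $V'_i$ give the connected components $(V'_i,E'_i)$, where $E'_i$ is the set of arcs of $E'$ with at least one endpoint in $V'_i$. A substructure is regular if $|V'|=|E'|$ and all-regular if each connected component is regular. *)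

theory Defs
  imports "HOL-Analysis.Analysis"
begin

text \<open>Oriented graph on vertex set V with arc set E (arcs are ordered pairs,
  so no multiple arcs): finite, no loops, no pair of opposite arcs.\<close>
definition oriented_graph :: "'v set \<Rightarrow> ('v \<times> 'v) set \<Rightarrow> bool" where
  "oriented_graph V E \<longleftrightarrow> finite V \<and> E \<subseteq> V \<times> V \<and>
     (\<forall>u. (u, u) \<notin> E) \<and> (\<forall>u v. (u, v) \<in> E \<longrightarrow> (v, u) \<notin> E)"

definition substructure :: "'v set \<Rightarrow> ('v \<times> 'v) set \<Rightarrow> 'v set \<Rightarrow> ('v \<times> 'v) set \<Rightarrow> bool" where
  "substructure V E V' E' \<longleftrightarrow> V' \<subseteq> V \<and> E' \<subseteq> E"

definition incident_arcs :: "('v \<times> 'v) set \<Rightarrow> 'v \<Rightarrow> ('v \<times> 'v) set" where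
  "incident_arcs E' u = {e \<in> E'. fst e = u \<or> snd e = u}"

definition herm_laplacian :: "complex \<Rightarrow> ('v \<times> 'v) set \<Rightarrow> 'v \<Rightarrow> 'v \<Rightarrow> complex" where
  "herm_laplacian \<omega> E' u v =
     (if u = v then of_nat (card (incident_arcs E' u))
      else if (u, v) \<in> E' then - \<omega>
      else if (v, u) \<in> E' then - cnj \<omega>
      else 0)"

definition det_on :: "'v set \<Rightarrow> ('v \<Rightarrow> 'v \<Rightarrow> complex) \<Rightarrow> complex" where
  "det_on S M = (\<Sum>p \<in> {p. p permutes S}. of_int (sign p) * (\<Prod>i\<in>S. M i (p i)))"

definition conn_rel :: "'v set \<Rightarrow> ('v \<times> 'v) set \<Rightarrow> ('v \<times> 'v) set" where
  "conn_rel V' E' =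
     ({(u, v). u \<in> V' \<and> v \<in> V' \<and> ((u, v) \<in> E' \<or> (v, u) \<in> E')})\<^sup>* \<inter> (V' \<times> V')"

definition components :: "'v set \<Rightarrow> ('v \<times> 'v) set \<Rightarrow> 'v set set" where
  "components V' E' = V' // conn_rel V' E'"

definition comp_arcs :: "('v \<times> 'v) set \<Rightarrow> 'v set \<Rightarrow> ('v \<times> 'v) set" where
  "comp_arcs E' C = {e \<in> E'. fst e \<in> C \<or> snd e \<in> C}"

definition all_regular :: "'v set \<Rightarrow> ('v \<times> 'v) set \<Rightarrow> bool" where
  "all_regular V' E' \<longleftrightarrow> (\<forall>C \<in> components V' E'. card C = card (comp_arcs E' C))"

end

theory Submission
  imports Defs "Jordan_Normal_Form.Determinant"
begin


lemma det_on_transfer: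
  fixes M :: "'v \<Rightarrow> 'v \<Rightarrow> complex"
  assumes fS: "finite S" and f: "bij_betw f {0..<n} S"
  shows "det_on S M = det (mat n n (\<lambda>(i,j). M (f i) (f j)))"
proof -
  define g where "g = inv_into {0..<n} f"
  have g: "bij_betw g S {0..<n}" unfolding g_def by (rule bij_betw_inv_into[OF f])
  have gf: "\<And>x. x \<in> {0..<n} \<Longrightarrow> g (f x) = x" unfolding g_def using f bij_betw_inv_into_left by fast
  have fg: "\<And>x. x \<in> S \<Longrightarrow> f (g x) = x" unfolding g_def using f bij_betw_inv_into_right by fast
  define h where "h = map_permutation {0..<n} f"
  have hb: "bij_betw h {p. p permutes {0..<n}} {q. q permutes S}"
  proof (rule bij_betw_byWitness[where f'="map_permutation S g"])
    show "\<forall>a\<in>{p. p permutes {0..<n}}. map_permutation S g (h a) = a"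
      unfolding h_def using map_permutation_compose_inv[OF f _ gf] by auto
    show "\<forall>a'\<in>{q. q permutes S}. h (map_permutation S g a') = a'"
      unfolding h_def using map_permutation_compose_inv[OF g _ fg] by auto
    show "h ` {p. p permutes {0..<n}} \<subseteq> {q. q permutes S}"
      unfolding h_def using map_permutation_permutes[OF f] by auto
    show "map_permutation S g ` {q. q permutes S} \<subseteq> {p. p permutes {0..<n}}"
      using map_permutation_permutes[OF g] by auto
  qed
  have inj: "inj_on f {0..<n}" using f bij_betw_def by blast
  have "det_on S M = (\<Sum>p \<in> {p. p permutes {0..<n}}. of_int (sign (h p)) * (\<Prod>i\<in>S. M i (h p i)))"
    unfolding det_on_def by (rule sum.reindex_bij_betw[OF hb, symmetric])
  also have "\<dots> = (\<Sum>p \<in> {p. p permutes {0..<n}}. signof p * (\<Prod>i=0..<n. mat n n (\<lambda>(i,j). M (f i) (f j)) $$ (i, p i)))"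
  proof (rule sum.cong[OF refl])
    fix p assume "p \<in> {p. p permutes {0..<n}}"
    hence p: "p permutes {0..<n}" by simp
    have s: "sign (h p) = sign p" unfolding h_def by (rule sign_map_permutation[OF inj p]) simp
    have "(\<Prod>i\<in>S. M i (h p i)) = (\<Prod>i\<in>{0..<n}. M (f i) (h p (f i)))"
      by (rule prod.reindex_bij_betw[OF f, symmetric])
    also have "\<dots> = (\<Prod>i=0..<n. mat n n (\<lambda>(i,j). M (f i) (f j)) $$ (i, p i))"
      by (rule prod.cong[OF refl]) (use p permutes_in_image[OF p] in \<open>auto simp: h_def map_permutation_apply[OF inj]\<close>)
    finally show "of_int (sign (h p)) * (\<Prod>i\<in>S. M i (h p i)) = signof p * (\<Prod>i=0..<n. mat n n (\<lambda>(i,j). M (f i) (f j)) $$ (i, p i))"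
      using s by simp
  qed
  also have "\<dots> = det (mat n n (\<lambda>(i,j). M (f i) (f j)))"
    by (rule det_def'[symmetric]) simp
  finally show ?thesis .
qed



lemma det_on_zero_iff:
  fixes M :: "'v \<Rightarrow> 'v \<Rightarrow> complex"
  assumes fS: "finite S"
  shows "det_on S M = 0 \<longleftrightarrow> (\<exists>y. (\<exists>i\<in>S. y i \<noteq> 0) \<and> (\<forall>i\<in>S. (\<Sum>j\<in>S. M i j * y j) = 0))"
proof -
  define n where "n = card S"
  obtain f where f: "bij_betw f {0..<n} S" using ex_bij_betw_nat_finite[OF fS] n_def by blast
  define g where "g = inv_into {0..<n} f"
  have g: "bij_betw g S {0..<n}" unfolding g_def by (rule bij_betw_inv_into[OF f])
  have gf: "\<And>x. x \<in> {0..<n} \<Longrightarrow> g (f x) = x" unfolding g_def using f bij_betw_inv_into_left by fast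
  have fg: "\<And>x. x \<in> S \<Longrightarrow> f (g x) = x" unfolding g_def using f bij_betw_inv_into_right by fast
  have fin: "\<And>i. i < n \<Longrightarrow> f i \<in> S" using f bij_betwE by fastforce
  have gin: "\<And>s. s \<in> S \<Longrightarrow> g s < n" using g bij_betwE by fastforce
  define A where "A = mat n n (\<lambda>(i,j). M (f i) (f j))"
  have A: "A \<in> carrier_mat n n" unfolding A_def by simp
  have mv: "\<And>v i. v \<in> carrier_vec n \<Longrightarrow> i < n \<Longrightarrow> (A *\<^sub>v v) $ i = (\<Sum>t\<in>S. M (f i) t * v $ (g t))"
  proof -
    fix v :: "complex vec" and i assume v: "v \<in> carrier_vec n" and i: "i < n"
    have "(A *\<^sub>v v) $ i = (\<Sum>j\<in>{0..<n}. M (f i) (f j) * v $ j)"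
      using v i unfolding A_def by (auto simp: scalar_prod_def)
    also have "\<dots> = (\<Sum>j\<in>{0..<n}. M (f i) (f j) * v $ (g (f j)))"
      by (rule sum.cong) (auto simp: gf)
    also have "\<dots> = (\<Sum>t\<in>S. M (f i) t * v $ (g t))"
      by (rule sum.reindex_bij_betw[OF f])
    finally show "(A *\<^sub>v v) $ i = (\<Sum>t\<in>S. M (f i) t * v $ (g t))" .
  qed
  have "det_on S M = det A" unfolding A_def by (rule det_on_transfer[OF fS f])
  hence "det_on S M = 0 \<longleftrightarrow> (\<exists>v. v \<in> carrier_vec n \<and> v \<noteq> 0\<^sub>v n \<and> A *\<^sub>v v = 0\<^sub>v n)"
    using det_0_iff_vec_prod_zero[OF A] by simp
  also have "\<dots> \<longleftrightarrow> (\<exists>y. (\<exists>i\<in>S. y i \<noteq> 0) \<and> (\<forall>i\<in>S. (\<Sum>j\<in>S. M i j * y j) = 0))"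
  proof
    assume "\<exists>v. v \<in> carrier_vec n \<and> v \<noteq> 0\<^sub>v n \<and> A *\<^sub>v v = 0\<^sub>v n"
    then obtain v where v: "v \<in> carrier_vec n" "v \<noteq> 0\<^sub>v n" "A *\<^sub>v v = 0\<^sub>v n" by blast
    obtain i where i: "i < n" "v $ i \<noteq> 0" using v(1,2) by (metis carrier_vecD eq_vecI index_zero_vec(1,2))
    show "\<exists>y. (\<exists>i\<in>S. y i \<noteq> 0) \<and> (\<forall>i\<in>S. (\<Sum>j\<in>S. M i j * y j) = 0)"
    proof (intro exI[of _ "\<lambda>t. v $ g t"] conjI ballI)
      show "\<exists>i\<in>S. v $ g i \<noteq> 0" using i fin gf by (intro bexI[of _ "f i"]) auto
      fix s assume s: "s \<in> S"
      have "(A *\<^sub>v v) $ (g s) = 0" using v(3) gin[OF s] by simp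
      thus "(\<Sum>j\<in>S. M s j * v $ g j) = 0" using mv[OF v(1) gin[OF s]] fg[OF s] by simp
    qed
  next
    assume "\<exists>y. (\<exists>i\<in>S. y i \<noteq> 0) \<and> (\<forall>i\<in>S. (\<Sum>j\<in>S. M i j * y j) = 0)"
    then obtain y s where y: "s \<in> S" "y s \<noteq> 0" "\<forall>i\<in>S. (\<Sum>j\<in>S. M i j * y j) = 0" by blast
    define v where "v = vec n (\<lambda>j. y (f j))"
    have v: "v \<in> carrier_vec n" unfolding v_def by simp
    have vg: "\<And>t. t \<in> S \<Longrightarrow> v $ g t = y t" unfolding v_def using gin fg by simp
    show "\<exists>v. v \<in> carrier_vec n \<and> v \<noteq> 0\<^sub>v n \<and> A *\<^sub>v v = 0\<^sub>v n"
    proof (intro exI[of _ v] conjI v)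
      show "v \<noteq> 0\<^sub>v n"
      proof
        assume "v = 0\<^sub>v n" 
        hence "v $ g s = 0" using gin[OF y(1)] by simp
        thus False using vg[OF y(1)] y(2) by simp
      qed
      show "A *\<^sub>v v = 0\<^sub>v n"
      proof (rule eq_vecI)
        fix i assume "i < dim_vec (0\<^sub>v n :: complex vec)"
        hence i: "i < n" by simp
        have "(A *\<^sub>v v) $ i = (\<Sum>t\<in>S. M (f i) t * y t)" using mv[OF v i] vg by simp
        also have "\<dots> = 0" using y(3) fin[OF i] by blast
        finally show "(A *\<^sub>v v) $ i = 0\<^sub>v n $ i" using i by simp
      qed (use A in simp)
    qed
  qed
  finally show ?thesis .
qed

lemma det_on_zero_row:
  fixes M :: "'v \<Rightarrow> 'v \<Rightarrow> complex"
  assumes "finite S" "c \<in> S" "\<And>w. M c w = 0"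
  shows "det_on S M = 0"
  unfolding det_on_def
  by (rule sum.neutral) (use assms in \<open>auto intro!: prod_zero\<close>)



definition xv :: "complex \<Rightarrow> 'v \<times> 'v \<Rightarrow> 'v \<Rightarrow> complex" where
  "xv \<omega> e w = (if w = fst e then 1 else if w = snd e then - cnj \<omega> else 0)"

lemma lap_decomp:
  assumes noloop: "\<forall>u. (u,u) \<notin> E'" and anti: "\<forall>u v. (u,v) \<in> E' \<longrightarrow> (v,u) \<notin> E'"
    and fE: "finite E'" and om: "cmod \<omega> = 1"
  shows "herm_laplacian \<omega> E' u w = (\<Sum>e\<in>E'. xv \<omega> e u * cnj (xv \<omega> e w))"
proof (cases "u = w")
  case True
  have oo: "cnj \<omega> * \<omega> = 1"
    using complex_norm_square[of \<omega>] om by (simp add: mult.commute)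
  have "(\<Sum>e\<in>E'. xv \<omega> e u * cnj (xv \<omega> e u)) = (\<Sum>e\<in>E'. if fst e = u \<or> snd e = u then 1 else 0)"
    by (rule sum.cong) (auto simp: xv_def oo)
  also have "\<dots> = (\<Sum>e\<in>incident_arcs E' u. 1)"
    unfolding incident_arcs_def by (subst sum.inter_filter[OF fE]) simp
  also have "\<dots> = of_nat (card (incident_arcs E' u))" by simp
  finally show ?thesis using True by (simp add: herm_laplacian_def)
next
  case False
  have "(\<Sum>e\<in>E'. xv \<omega> e u * cnj (xv \<omega> e w)) = (\<Sum>e\<in>E'. (if e = (u,w) then - \<omega> else 0) + (if e = (w,u) then - cnj \<omega> else 0))"
  proof (rule sum.cong[OF refl])
    fix e assume e: "e \<in> E'"
    obtain a b where ab: "e = (a,b)" by force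
    have "a \<noteq> b" using noloop e ab by auto
    thus "xv \<omega> e u * cnj (xv \<omega> e w) = (if e = (u,w) then - \<omega> else 0) + (if e = (w,u) then - cnj \<omega> else 0)"
      using False unfolding ab xv_def by auto
  qed
  also have "\<dots> = (if (u,w) \<in> E' then - \<omega> else 0) + (if (w,u) \<in> E' then - cnj \<omega> else 0)"
    by (simp only: sum.distrib sum.delta[OF fE])
  also have "\<dots> = herm_laplacian \<omega> E' u w"
    using False anti unfolding herm_laplacian_def by auto
  finally show ?thesis by simp
qed

lemma key:
  assumes noloop: "\<forall>u. (u,u) \<notin> E'" and anti: "\<forall>u v. (u,v) \<in> E' \<longrightarrow> (v,u) \<notin> E'"
    and fE: "finite E'" and om: "cmod \<omega> = 1" and fV: "finite V'"
    and det: "det_on V' (herm_laplacian \<omega> E') \<noteq> 0" and CV: "C \<subseteq> V'"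
  shows "card C \<le> card (comp_arcs E' C)"
proof (rule ccontr)
  assume "\<not> card C \<le> card (comp_arcs E' C)"
  hence lt: "card (comp_arcs E' C) < card C" by simp
  define A where "A = comp_arcs E' C"
  have fA: "finite A" unfolding A_def comp_arcs_def using fE by simp
  have fC: "finite C" using fV CV finite_subset by blast
  obtain g where g: "g ` A \<subseteq> C" "inj_on g A" using card_le_inj[OF fA fC] lt A_def by fastforce
  have "card (g ` A) < card C" using card_image[OF g(2)] lt A_def by simp
  then obtain c where c: "c \<in> C" "c \<notin> g ` A" using g(1) by (metis psubsetI psubset_card_mono fC card_mono less_le_not_le subsetI)
  define Mc where "Mc = (\<lambda>u w. if u \<in> g ` A then cnj (xv \<omega> (the_inv_into A g u) w) else 0)"
  have "det_on C Mc = 0" by (rule det_on_zero_row[OF fC c(1)]) (use c(2) in \<open>simp add: Mc_def\<close>)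
  then obtain y where y: "\<exists>i\<in>C. y i \<noteq> 0" "\<forall>i\<in>C. (\<Sum>j\<in>C. Mc i j * y j) = 0"
    using det_on_zero_iff[OF fC] by blast
  have orth: "(\<Sum>w\<in>C. cnj (xv \<omega> e w) * y w) = 0" if e: "e \<in> A" for e
  proof -
    have "g e \<in> C" using g(1) e by blast
    hence "(\<Sum>j\<in>C. Mc (g e) j * y j) = 0" using y(2) by blast
    moreover have "g e \<in> g ` A" using e by blast
    ultimately show ?thesis using the_inv_into_f_f[OF g(2) e] by (simp add: Mc_def)
  qed
  have orth2: "(\<Sum>w\<in>C. cnj (xv \<omega> e w) * y w) = 0" if e: "e \<in> E'" for e
  proof (cases "e \<in> A")
    case True thus ?thesis by (rule orth)
  next
    case False
    hence "fst e \<notin> C" "snd e \<notin> C" using e unfolding A_def comp_arcs_def by auto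
    hence "\<And>w. w \<in> C \<Longrightarrow> xv \<omega> e w = 0" unfolding xv_def by auto
    thus ?thesis by simp
  qed
  define z where "z = (\<lambda>w. if w \<in> C then y w else 0)"
  have "det_on V' (herm_laplacian \<omega> E') = 0"
  proof (subst det_on_zero_iff[OF fV], intro exI[of _ z] conjI ballI)
    show "\<exists>i\<in>V'. z i \<noteq> 0" using y(1) CV z_def by auto
    fix u assume u: "u \<in> V'"
    have "(\<Sum>w\<in>V'. herm_laplacian \<omega> E' u w * z w) = (\<Sum>w\<in>V'. if w \<in> C then herm_laplacian \<omega> E' u w * y w else 0)"
      by (rule sum.cong) (auto simp: z_def)
    also have "\<dots> = (\<Sum>w\<in>C. herm_laplacian \<omega> E' u w * y w)"
      by (subst sum.inter_filter[OF fV, symmetric]) (use CV in \<open>auto intro: sum.cong\<close>)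
    also have "\<dots> = (\<Sum>w\<in>C. \<Sum>e\<in>E'. xv \<omega> e u * (cnj (xv \<omega> e w) * y w))"
      by (simp add: lap_decomp[OF noloop anti fE om] sum_distrib_right mult.assoc)
    also have "\<dots> = (\<Sum>e\<in>E'. xv \<omega> e u * (\<Sum>w\<in>C. cnj (xv \<omega> e w) * y w))"
      by (subst sum.swap) (simp add: sum_distrib_left)
    also have "\<dots> = 0" using orth2 by simp
    finally show "(\<Sum>w\<in>V'. herm_laplacian \<omega> E' u w * z w) = 0" .
  qed
  thus False using det by simp
qed



theorem mainTheorem4:
  fixes V V' :: "'v set" and E E' :: "('v \<times> 'v) set" and \<omega> :: complex
  assumes "oriented_graph V E"
    and "substructure V E V' E'"
    and "card E' \<le> card V'"
    and "cmod \<omega> = 1"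
    and "det_on V' (herm_laplacian \<omega> E') \<noteq> 0"
  shows "all_regular V' E'"
proof -
  have og: "finite V" "E \<subseteq> V \<times> V" "\<forall>u. (u, u) \<notin> E" "\<forall>u v. (u, v) \<in> E \<longrightarrow> (v, u) \<notin> E"
    using assms(1) unfolding oriented_graph_def by simp_all
  have VV: "V' \<subseteq> V" and EE: "E' \<subseteq> E" using assms(2) unfolding substructure_def by simp_all
  have fV: "finite V" by (rule og(1))
  have nl: "\<forall>u. (u,u) \<notin> E'" using og(3) EE by auto
  have an: "\<forall>u v. (u,v) \<in> E' \<longrightarrow> (v,u) \<notin> E'" using og(4) EE by auto
  have fV': "finite V'" by (rule finite_subset[OF VV fV])
  have fE': "finite E'" by (rule finite_subset[OF subset_trans[OF EE og(2)]]) (simp add: fV)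
  define B where "B = {(u, v). u \<in> V' \<and> v \<in> V' \<and> ((u, v) \<in> E' \<or> (v, u) \<in> E')}"
  define R where "R = conn_rel V' E'"
  have R: "R = B\<^sup>* \<inter> V' \<times> V'" unfolding R_def conn_rel_def B_def by simp
  have symB: "sym B" unfolding B_def sym_def by auto
  have eq: "equiv V' R"
  proof (rule equivI)
    show "R \<subseteq> V' \<times> V'" unfolding R by blast
    show "refl_on V' R" unfolding R refl_on_def by blast
    show "sym R" unfolding R by (intro sym_Int sym_rtrancl symB) (auto simp: sym_def)
    show "trans R" unfolding R by (intro trans_Int trans_rtrancl) (auto simp: trans_def)
  qed
  define Q where "Q = components V' E'"
  have Q: "Q = V' // R" unfolding Q_def components_def R_def ..
  have fQ: "finite Q" unfolding Q using finite_quotient[OF fV' equiv_type[OF eq]] .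
  have sub: "\<And>C. C \<in> Q \<Longrightarrow> C \<subseteq> V'" unfolding Q using in_quotient_imp_subset[OF eq] by blast
  have le: "\<And>C. C \<in> Q \<Longrightarrow> card C \<le> card (comp_arcs E' C)"
    using key[OF nl an fE' assms(4) fV' assms(5)] sub by blast
  have clos: "y \<in> C" if "C \<in> Q" "x \<in> C" "y \<in> V'" "(x,y) \<in> E' \<or> (y,x) \<in> E'" for C x y
  proof -
    have "x \<in> V'" using sub that by blast
    hence "(x,y) \<in> B" unfolding B_def using that by simp
    hence "(x,y) \<in> R" unfolding R using \<open>x \<in> V'\<close> that(3) by (simp add: r_into_rtrancl)
    thus ?thesis using in_quotient_imp_closed[OF eq] that Q by blast
  qed
  have disj: "\<forall>C1\<in>Q. \<forall>C2\<in>Q. C1 \<noteq> C2 \<longrightarrow> comp_arcs E' C1 \<inter> comp_arcs E' C2 = {}"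
  proof (intro ballI impI)
    fix C1 C2 assume C: "C1 \<in> Q" "C2 \<in> Q" "C1 \<noteq> C2"
    have d: "C1 \<inter> C2 = {}" using quotient_disj[OF eq] C Q by blast
    show "comp_arcs E' C1 \<inter> comp_arcs E' C2 = {}"
    proof (rule ccontr)
      assume "comp_arcs E' C1 \<inter> comp_arcs E' C2 \<noteq> {}"
      then obtain e where e: "e \<in> comp_arcs E' C1" "e \<in> comp_arcs E' C2" by blast
      obtain a b where eab: "e = (a,b)" by force
      have ab: "(a,b) \<in> E'" "a \<in> C1 \<or> b \<in> C1" "a \<in> C2 \<or> b \<in> C2"
        using e unfolding eab comp_arcs_def by auto
      have o1: "(a,b) \<in> E' \<or> (b,a) \<in> E'" "(b,a) \<in> E' \<or> (a,b) \<in> E'" using ab(1) by simp_all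
      have "\<And>x. x \<in> C2 \<Longrightarrow> x \<in> V'" using sub[OF C(2)] by blast
      moreover have "a \<in> C1 \<Longrightarrow> b \<in> V' \<Longrightarrow> b \<in> C1" using clos[OF C(1) _ _ o1(1)] .
      moreover have "b \<in> C1 \<Longrightarrow> a \<in> V' \<Longrightarrow> a \<in> C1" using clos[OF C(1) _ _ o1(2)] .
      ultimately have "a \<in> C1 \<inter> C2 \<or> b \<in> C1 \<inter> C2" using ab(2,3) by blast
      thus False using ab d by blast
    qed
  qed
  have fA: "\<forall>C\<in>Q. finite (comp_arcs E' C)" unfolding comp_arcs_def using fE' by simp
  have fC: "\<forall>C\<in>Q. finite C" using sub fV' finite_subset by blast
  have s1: "card V' = (\<Sum>C\<in>Q. card C)"
  proof -
    have "card (\<Union>((\<lambda>C. C) ` Q)) = (\<Sum>C\<in>Q. card C)"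
      by (rule card_UN_disjoint[OF fQ fC]) (use quotient_disj[OF eq] Q in blast)
    thus ?thesis using Union_quotient[OF eq] Q by simp
  qed
  have s2: "(\<Sum>C\<in>Q. card (comp_arcs E' C)) \<le> card E'"
  proof -
    have "(\<Sum>C\<in>Q. card (comp_arcs E' C)) = card (\<Union>C\<in>Q. comp_arcs E' C)"
      by (rule card_UN_disjoint[OF fQ fA disj, symmetric])
    also have "\<dots> \<le> card E'" by (rule card_mono[OF fE']) (auto simp: comp_arcs_def)
    finally show ?thesis .
  qed
  show ?thesis unfolding all_regular_def Q_def[symmetric]
  proof (rule ccontr)
    assume "\<not> (\<forall>C\<in>Q. card C = card (comp_arcs E' C))"
    then obtain C where "C \<in> Q" "card C < card (comp_arcs E' C)" using le le_neq_implies_less by blast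
    hence "(\<Sum>C\<in>Q. card C) < (\<Sum>C\<in>Q. card (comp_arcs E' C))"
      using sum_strict_mono_ex1[OF fQ, of card "\<lambda>C. card (comp_arcs E' C)"] le by blast
    thus False using s1 s2 assms(3) by linarith
  qed
qed


end
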